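(* Suppose the support of $\mathbb F$ is $(0,1)$. Then any optimal monotone threshold mechanism for agent $i$ excludes a bottom type: there exists $\epsilon_i>0$ such that $x_i(s_i,s_{-i})=0$ for all $s_i\le\epsilon_i$ and all $s_{-i}$. Consequently, the efficient allocation $x_i(s_i,s_{-i})=\mathbb I\{\mathrm{LR}(s_i,s_{-i})\ge1\}$ is never optimal.
   Context: Setup. A state $\omega\in\{-1,+1\}$ is drawn with probability $1/2$ each. There are $n\ge 2$ agents. Conditional on $\omega$, signals $s_1,\dots,s_n$ are i.i.d. with distribution $\mathbb F_\omega$ on $[0,1]$, normalized so that $s_i=\mathbb P[\omega=+1\mid s_i]$. $\mathbb F_{-1},\mathbb F_{+1}$ are mutually absolutely continuous with densities; $\mathbb F=(\mathbb F_{-1}+\mathbb F_{+1})/2$ has density $f$, differentiable on its support with continuous derivative and $|f'/f|$ bounded. $\mathrm{LR}(E)=\mathbb P[E\mid\omega=+1]/\mathbb P[E\mid\omega=-1]$; $\mathrm{LR}(s_{-i})=\prod_{k\ne i}\frac{s_k}{1-s_k}$, $\mathrm{LR}(s_i,s_{-i})=\prod_k\frac{s_k}{1-s_k}$. A mechanism is a measurable $x$ mapping signal profiles to $[0,1]^n$ ($x_i(s)$ = probability agent $i$ gets a good worth $\omega$ to her, else $0$). Feasibility for agent $i$: for all types $s_i,\hat s_i$, (P) $\mathbb E[\omega x_i(s_i,s_{-i})\mid s_i]\ge0$ and (IC) $\mathbb E[\omega x_i(s_i,s_{-i})\mid s_i]\ge\mathbb E[\omega x_i(\hat s_i,s_{-i})\mid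 s_i]$. Optimal for agent $i$: maximizes $\mathbb E[x_i(s)]$ subject to (P),(IC). Monotone threshold mechanism: a partition of the signal space into intervals such that on each interval $S$, $x_i(s_i,s_{-i})=\kappa\,\mathbb I\{\mathrm{LR}(s_{-i})\ge\tau\}$ for some $\kappa\in[0,1]$, $\tau\ge0$. *)

theory Defs
  imports "HOL-Analysis.Analysis"
begin

text \<open>Agents are indexed by a finite type 'a (n = CARD('a)).  The conditional signal densities (w.r.t. Lebesgue measure) are
fp (state +1) and fm (state -1); the unconditional density is f = (fm + fp)/2.\<close>

definition mixf :: "(real \<Rightarrow> real) \<Rightarrow> (real \<Rightarrow> real) \<Rightarrow> real \<Rightarrow> real" where
  "mixf fp fm u = (fp u + fm u) / 2"

definition sig_profile :: "('a \<Rightarrow> real) \<Rightarrow> bool" where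
  "sig_profile s \<longleftrightarrow> (\<forall>k. s k \<in> {0<..<1})"

definition LR_minus :: "'a::finite \<Rightarrow> ('a \<Rightarrow> real) \<Rightarrow> real" where
  "LR_minus i s = (\<Prod>k\<in>UNIV - {i}. s k / (1 - s k))"

definition LR_full :: "('a::finite \<Rightarrow> real) \<Rightarrow> real" where
  "LR_full s = (\<Prod>k\<in>UNIV. s k / (1 - s k))"

definition is_mechanism :: "(('a::finite \<Rightarrow> real) \<Rightarrow> 'a \<Rightarrow> real) \<Rightarrow> bool" where
  "is_mechanism x \<longleftrightarrow>
     (\<forall>i. (\<lambda>s. x s i) \<in> borel_measurable (PiM UNIV (\<lambda>_. lborel))) \<and>
     (\<forall>s i. sig_profile s \<longrightarrow> 0 \<le> x s i \<and> x s i \<le> 1)"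

text \<open>cond_gain fp fm x i si t = E[omega * x_i(t, s_{-i}) | s_i = si].
  Given s_i = si, P[omega=+1 | si] = si, and s_{-i} has conditional density
  prod fp (resp. prod fm) given omega = +1 (resp. -1).\<close>
definition cond_gain ::
  "(real \<Rightarrow> real) \<Rightarrow> (real \<Rightarrow> real) \<Rightarrow> (('a::finite \<Rightarrow> real) \<Rightarrow> 'a \<Rightarrow> real) \<Rightarrow> 'a \<Rightarrow> real \<Rightarrow> real \<Rightarrow> real"
  where
  "cond_gain fp fm x i si t =
     (\<integral>r. (si * (\<Prod>k\<in>UNIV - {i}. fp (r k)) - (1 - si) * (\<Prod>k\<in>UNIV - {i}. fm (r k)))
           * x (r(i := t)) i \<partial>(PiM (UNIV - {i}) (\<lambda>_. lborel)))"

definition feasible ::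
  "(real \<Rightarrow> real) \<Rightarrow> (real \<Rightarrow> real) \<Rightarrow> (('a::finite \<Rightarrow> real) \<Rightarrow> 'a \<Rightarrow> real) \<Rightarrow> 'a \<Rightarrow> bool"
  where
  "feasible fp fm x i \<longleftrightarrow>
     (\<forall>si\<in>{0<..<1}. 0 \<le> cond_gain fp fm x i si si \<and>
        (\<forall>t\<in>{0<..<1}. cond_gain fp fm x i si t \<le> cond_gain fp fm x i si si))"

text \<open>E[x_i(s)]: the joint density of the profile is (prod fp + prod fm)/2.\<close>
definition expected_alloc ::
  "(real \<Rightarrow> real) \<Rightarrow> (real \<Rightarrow> real) \<Rightarrow> (('a::finite \<Rightarrow> real) \<Rightarrow> 'a \<Rightarrow> real) \<Rightarrow> 'a \<Rightarrow> real"
  where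
  "expected_alloc fp fm x i =
     (\<integral>s. ((\<Prod>k\<in>UNIV. fp (s k)) + (\<Prod>k\<in>UNIV. fm (s k))) / 2 * x s i
        \<partial>(PiM UNIV (\<lambda>_. lborel)))"

definition optimal ::
  "(real \<Rightarrow> real) \<Rightarrow> (real \<Rightarrow> real) \<Rightarrow> (('a::finite \<Rightarrow> real) \<Rightarrow> 'a \<Rightarrow> real) \<Rightarrow> 'a \<Rightarrow> bool"
  where
  "optimal fp fm x i \<longleftrightarrow> is_mechanism x \<and> feasible fp fm x i \<and>
     (\<forall>y. is_mechanism y \<and> feasible fp fm y i \<longrightarrow> expected_alloc fp fm y i \<le> expected_alloc fp fm x i)"

definition mono_threshold :: "(('a::finite \<Rightarrow> real) \<Rightarrow> 'a \<Rightarrow> real) \<Rightarrow> 'a \<Rightarrow> bool" where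
  "mono_threshold x i \<longleftrightarrow>
     (\<exists>P. (\<forall>S\<in>P. S \<noteq> {} \<and> is_interval S) \<and> disjoint P \<and> \<Union>P = {0<..<1} \<and>
        (\<forall>S\<in>P. \<exists>\<kappa> \<tau>. 0 \<le> \<kappa> \<and> \<kappa> \<le> 1 \<and> 0 \<le> \<tau> \<and>
           (\<forall>s. sig_profile s \<and> s i \<in> S \<longrightarrow>
                 x s i = \<kappa> * (if LR_minus i s \<ge> \<tau> then 1 else 0))))"

definition efficient_mech :: "('a::finite \<Rightarrow> real) \<Rightarrow> 'a \<Rightarrow> real" where
  "efficient_mech s j = (if LR_full s \<ge> 1 then 1 else 0)"

end

theory Submission
  imports Defs
begin


lemma bdd_set_integrable:
  fixes f :: "real \<Rightarrow> real"
  assumes f: "f \<in> borel_measurable lborel" and A: "A \<in> sets lborel" "A \<subseteq> {0<..<1}"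
    and b: "\<And>x. x \<in> A \<Longrightarrow> \<bar>f x\<bar> \<le> C"
  shows "set_integrable lborel A f"
  unfolding set_integrable_def
proof (rule Bochner_Integration.integrable_bound)
  show "integrable lborel (\<lambda>x::real. C * indicator {0<..<1::real} x)"
  proof -
    have "emeasure lborel {0<..<1::real} = ennreal 1" by (subst emeasure_lborel_Ioo) auto
    then have "emeasure lborel {0<..<1::real} < top" by simp
    then show ?thesis by (intro integrable_mult_right) (auto simp add: integrable_indicator_iff)
  qed
  show "(\<lambda>x. indicat_real A x *\<^sub>R f x) \<in> borel_measurable lborel"
    using f A by measurable
  show "AE x in lborel. norm (indicat_real A x *\<^sub>R f x) \<le> norm (C * indicat_real {0<..<1::real} x)"
    using A b by (auto split: split_indicator simp: abs_real_def intro!: AE_I2)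
     (smt (verit) b greaterThanLessThan_iff subset_iff)+
qed

definition g1 :: "(real \<Rightarrow> real) \<Rightarrow> (real \<Rightarrow> real) \<Rightarrow> real \<Rightarrow> real \<Rightarrow> real" where
  "g1 p m s t = s * p t - (1 - s) * m t"

definition ic1 :: "(real \<Rightarrow> real) \<Rightarrow> (real \<Rightarrow> real) \<Rightarrow> bool" where
  "ic1 p m \<longleftrightarrow> (\<forall>s\<in>{0<..<1}. 0 \<le> g1 p m s s \<and> (\<forall>t\<in>{0<..<1}. g1 p m s t \<le> g1 p m s s))"

lemma ic1_Q_mono:
  assumes "ic1 p m" "0 < a" "a \<le> b" "b < 1"
  shows "p a + m a \<le> p b + m b"
proof (cases "a = b")
  case False
  have 1: "g1 p m a b \<le> g1 p m a a" and 2: "g1 p m b a \<le> g1 p m b b"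
    using assms unfolding ic1_def by auto
  have eq: "(g1 p m a a - g1 p m a b) + (g1 p m b b - g1 p m b a) = (b - a) * ((p b + m b) - (p a + m a))"
    unfolding g1_def by (simp add: algebra_simps)
  have "0 \<le> (b - a) * ((p b + m b) - (p a + m a))" using 1 2 eq by linarith
  moreover have "b - a > 0" using False assms by auto
  ultimately show ?thesis by (simp add: zero_le_mult_iff)
qed simp

lemma ic1_env:
  assumes "ic1 p m" "a \<in> {0<..<1}" "b \<in> {0<..<1}"
  shows "(b - a) * (p a + m a) \<le> g1 p m b b - g1 p m a a"
    and "g1 p m b b - g1 p m a a \<le> (b - a) * (p b + m b)"
proof -
  have 1: "g1 p m a b \<le> g1 p m a a" and 2: "g1 p m b a \<le> g1 p m b b"
    using assms unfolding ic1_def by auto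
  have e1: "g1 p m b a = g1 p m a a + (b - a) * (p a + m a)"
    and e2: "g1 p m a b = g1 p m b b - (b - a) * (p b + m b)"
    unfolding g1_def by (simp_all add: algebra_simps)
  show "(b - a) * (p a + m a) \<le> g1 p m b b - g1 p m a a" using 2 e1 by linarith
  show "g1 p m b b - g1 p m a a \<le> (b - a) * (p b + m b)" using 1 e2 by linarith
qed

lemma set_integral_const_Ioc:
  fixes c x y :: real
  assumes "x \<le> y"
  shows "(LINT r:{x<..y}|lborel. c) = (y - x) * c"
  using assms by (subst set_integral_const) (auto simp: emeasure_lborel_Ioc)

lemma ic1_envelope:
  assumes ic: "ic1 p m" and meas: "p \<in> borel_measurable borel" "m \<in> borel_measurable borel"
    and bnd: "\<And>t. t \<in> {0<..<1} \<Longrightarrow> 0 \<le> p t \<and> p t \<le> 1 \<and> 0 \<le> m t \<and> m t \<le> 1"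
    and s: "s \<in> {0<..<1}"
  shows "g1 p m s s = (LINT r:{0<..s}|lborel. p r + m r)"
proof -
  define Q where "Q r = p r + m r" for r
  define V where "V x = (LINT r:{0<..x}|lborel. Q r)" for x
  define G where "G x = g1 p m x x - V x" for x
  have Qm: "Q \<in> borel_measurable lborel" using meas unfolding Q_def[abs_def] by simp
  have Qb: "\<And>r. r \<in> {0<..<1} \<Longrightarrow> 0 \<le> Q r \<and> Q r \<le> 2" using bnd by (fastforce simp: Q_def)
  have int: "\<And>A::real set. A \<in> sets lborel \<Longrightarrow> A \<subseteq> {0<..<1} \<Longrightarrow> set_integrable lborel A Q"
    by (rule bdd_set_integrable[OF Qm, where C=2]) (use Qb in auto)
  have intc: "set_integrable lborel A (\<lambda>_. c::real)" if "A \<in> sets lborel" "A \<subseteq> {0<..<1}" for A :: "real set" and c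
    by (rule bdd_set_integrable[where f="\<lambda>_. c" and C="\<bar>c\<bar>"]) (use that in auto)
  have Qmono: "\<And>x y. 0 < x \<Longrightarrow> x \<le> y \<Longrightarrow> y < 1 \<Longrightarrow> Q x \<le> Q y"
    unfolding Q_def using ic1_Q_mono[OF ic] by blast
  have split: "V y - V x = (LINT r:{x<..y}|lborel. Q r)" if "0 < x" "x \<le> y" "y < 1" for x y
  proof -
    have "{0<..y} = {0<..x} \<union> {x<..y}" using that by auto
    then have "V y = (LINT r:{0<..x}|lborel. Q r) + (LINT r:{x<..y}|lborel. Q r)"
      unfolding V_def using that by (simp, intro set_integral_Un int) auto
    then show ?thesis unfolding V_def by simp
  qed
  have ib: "(y - x) * Q x \<le> (LINT r:{x<..y}|lborel. Q r) \<and> (LINT r:{x<..y}|lborel. Q r) \<le> (y - x) * Q y"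
    if "0 < x" "x \<le> y" "y < 1" for x y
  proof -
    have sub: "{x<..y} \<subseteq> {0<..<1}" using that by auto
    have "(LINT r:{x<..y}|lborel. Q x) \<le> (LINT r:{x<..y}|lborel. Q r)"
      by (rule set_integral_mono) (use sub that Qmono in \<open>auto intro!: int intc\<close>)
    moreover have "(LINT r:{x<..y}|lborel. Q r) \<le> (LINT r:{x<..y}|lborel. Q y)"
      by (rule set_integral_mono) (use sub that Qmono in \<open>auto intro!: int intc\<close>)
    ultimately show ?thesis using that by (simp add: set_integral_const_Ioc)
  qed
  have step: "\<bar>G y - G x\<bar> \<le> (y - x) * (Q y - Q x)" if "0 < x" "x \<le> y" "y < 1" for x y
  proof -
    have e1: "(y - x) * Q x \<le> g1 p m y y - g1 p m x x" and e2: "g1 p m y y - g1 p m x x \<le> (y - x) * Q y"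
      using ic1_env[OF ic, of x y] that unfolding Q_def by auto
    have "G y - G x = (g1 p m y y - g1 p m x x) - (V y - V x)" unfolding G_def by simp
    moreover have "(y - x) * (Q y - Q x) = (y - x) * Q y - (y - x) * Q x" by (simp add: algebra_simps)
    ultimately show ?thesis using e1 e2 ib[OF that] split[OF that] by linarith
  qed
  have tele: "\<bar>G b - G a\<bar> \<le> 2 / real N" if "0 < a" "a < b" "b < 1" "N > 0" for a b N
  proof -
    define x where "x k = a + real k * (b - a) / real N" for k
    have x0: "x 0 = a" and xN: "x N = b" using that by (auto simp: x_def)
    have xr: "0 < x k \<and> x k < 1" if "k \<le> N" for k
    proof -
      have "real k * (b - a) / real N \<le> real N * (b - a) / real N"
        using that \<open>a < b\<close> \<open>N > 0\<close> by (intro divide_right_mono mult_right_mono) auto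
      then have "real k * (b - a) / real N \<le> b - a" using \<open>N > 0\<close> by simp
      moreover have "0 \<le> real k * (b - a) / real N" using \<open>a < b\<close> by auto
      ultimately show ?thesis using \<open>0 < a\<close> \<open>b < 1\<close> unfolding x_def by auto
    qed
    have xs: "x (Suc k) - x k = (b - a) / real N" for k
      unfolding x_def by (simp add: add_divide_distrib[symmetric] algebra_simps)
    have "G b - G a = (\<Sum>k<N. G (x (Suc k)) - G (x k))"
      by (subst sum_lessThan_telescope) (simp add: x0 xN)
    then have "\<bar>G b - G a\<bar> \<le> (\<Sum>k<N. \<bar>G (x (Suc k)) - G (x k)\<bar>)"
      by (simp add: sum_abs)
    also have "\<dots> \<le> (\<Sum>k<N. (b - a) / real N * (Q (x (Suc k)) - Q (x k)))"
    proof (rule sum_mono)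
      fix k assume "k \<in> {..<N}"
      then have "Suc k \<le> N" "k \<le> N" by auto
      moreover have "(b - a) / real N > 0" using that by simp
      ultimately have "0 < x k" "x k \<le> x (Suc k)" "x (Suc k) < 1"
        using xr xs[of k] by (auto simp del: of_nat_Suc)
      from step[OF this] show "\<bar>G (x (Suc k)) - G (x k)\<bar> \<le> (b - a) / real N * (Q (x (Suc k)) - Q (x k))"
        by (simp add: xs)
    qed
    also have "\<dots> = (b - a) / real N * (Q b - Q a)"
      by (simp only: sum_distrib_left[symmetric] sum_lessThan_telescope[of "\<lambda>k. Q (x k)"] x0 xN)
    also have "\<dots> \<le> 1 / real N * 2"
    proof (rule mult_mono)
      show "(b - a) / real N \<le> 1 / real N" using that by (intro divide_right_mono) auto
      show "Q b - Q a \<le> 2" using Qb[of a] Qb[of b] that by auto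
    qed (use that Qmono[of a b] in auto)
    finally show ?thesis by simp
  qed
  have const: "G a = G b" if "a \<in> {0<..<1}" "b \<in> {0<..<1}" "a < b" for a b
  proof (rule ccontr)
    assume "G a \<noteq> G b"
    then have d: "\<bar>G b - G a\<bar> > 0" by simp
    obtain N :: nat where N: "2 / \<bar>G b - G a\<bar> < real N" using reals_Archimedean2 by blast
    have "0 < 2 / \<bar>G b - G a\<bar>" using d by simp
    then have "real N > 0" using N by linarith
    then have "N > 0" by simp
    have "2 / real N < \<bar>G b - G a\<bar>" using N d \<open>N > 0\<close> by (simp add: field_simps)
    with tele[of a b N] that \<open>N > 0\<close> show False by auto
  qed
  have small: "\<bar>G a\<bar> \<le> 3 * a" if "a \<in> {0<..<1}" for a
  proof -
    have g0: "0 \<le> g1 p m a a" using ic that unfolding ic1_def by auto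
    have b1: "0 \<le> (1 - a) * m a" using bnd[OF that] that by simp
    have b2: "a * p a \<le> a * 1" using bnd[OF that] that by (intro mult_left_mono) auto
    have "g1 p m a a \<le> a" using b1 b2 unfolding g1_def by linarith
    moreover have "0 * a \<le> V a \<and> V a \<le> 2 * a"
    proof -
      have sub: "{0<..a} \<subseteq> {0<..<1}" using that by auto
      have "(LINT r:{0<..a}|lborel. 0) \<le> V a" unfolding V_def
        by (rule set_integral_mono) (use sub that Qb in \<open>auto intro!: int intc\<close>)
      moreover have "V a \<le> (LINT r:{0<..a}|lborel. 2)" unfolding V_def
        by (rule set_integral_mono) (use sub that Qb in \<open>auto intro!: int intc\<close>)
      ultimately show ?thesis using that by (simp add: set_integral_const_Ioc)
    qed
    ultimately show ?thesis using g0 unfolding G_def by auto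
  qed
  have "G s = 0"
  proof (rule ccontr)
    assume ne: "G s \<noteq> 0"
    define a where "a = min (s / 2) (\<bar>G s\<bar> / 6)"
    have a: "a \<in> {0<..<1}" "a < s" using s ne by (auto simp: a_def)
    have "G a = G s" using const[OF a(1) s a(2)] .
    with small[OF a(1)] have "\<bar>G s\<bar> \<le> 3 * a" by simp
    moreover have "3 * a \<le> \<bar>G s\<bar> / 2" unfolding a_def by linarith
    ultimately show False using ne by linarith
  qed
  then show ?thesis unfolding G_def V_def Q_def by simp
qed

lemma g1_shift: "g1 p m s t = g1 p m u t - (u - s) * (p t + m t)"
  unfolding g1_def by (simp add: algebra_simps)

lemma ic1_gain_mono:
  assumes ic: "ic1 p m" and "0 < s" "s < t1" "t1 \<le> t" "t < 1"
  shows "g1 p m s t \<le> g1 p m s t1"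
proof -
  have "g1 p m t1 t \<le> g1 p m t1 t1" using ic assms unfolding ic1_def by auto
  moreover have "(t1 - s) * (p t1 + m t1) \<le> (t1 - s) * (p t + m t)"
    using ic1_Q_mono[OF ic, of t1 t] assms by (intro mult_left_mono) auto
  ultimately show ?thesis using g1_shift[of p m s t t1] g1_shift[of p m s t1 t1] by linarith
qed

lemma ic1_trunc:
  assumes ic: "ic1 p m" and t1: "0 < t1" "t1 < 1" and Q: "p t1 + m t1 > 0"
    and t0: "t0 = m t1 / (p t1 + m t1)"
  shows "ic1 (\<lambda>t. if t \<le> t0 then 0 else if t < t1 then p t1 else p t)
             (\<lambda>t. if t \<le> t0 then 0 else if t < t1 then m t1 else m t)"
proof -
  define py where "py = (\<lambda>t. if t \<le> t0 then 0 else if t < t1 then p t1 else p t)"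
  define my where "my = (\<lambda>t. if t \<le> t0 then 0 else if t < t1 then m t1 else m t)"
  have gy: "g1 py my s t = (if t \<le> t0 then 0 else if t < t1 then g1 p m s t1 else g1 p m s t)" for s t
    unfolding py_def my_def g1_def by auto
  have mt: "m t1 = t0 * (p t1 + m t1)" using Q t0 by simp
  have sgn: "g1 p m s t1 = (s - t0) * (p t1 + m t1)" for s
    unfolding g1_def using mt by (simp add: algebra_simps)
  have le0: "g1 p m s t1 \<le> 0" if "s \<le> t0" for s
    using sgn[of s] that Q by (simp add: mult_nonpos_nonneg)
  have ge0: "g1 p m s t1 \<ge> 0" if "s \<ge> t0" for s
    using sgn[of s] that Q by simp
  have t01: "t0 \<le> t1"
  proof -
    have "0 \<le> g1 p m t1 t1" using ic t1 unfolding ic1_def by auto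
    then show ?thesis using sgn[of t1] Q by (simp add: zero_le_mult_iff)
  qed
  have U: "0 \<le> g1 p m s s" "\<And>t. t \<in> {0<..<1} \<Longrightarrow> g1 p m s t \<le> g1 p m s s" if "s \<in> {0<..<1}" for s
    using ic that unfolding ic1_def by auto
  have "0 \<le> g1 py my s s \<and> (\<forall>t\<in>{0<..<1}. g1 py my s t \<le> g1 py my s s)" if s: "s \<in> {0<..<1}" for s
  proof (intro conjI ballI)
    show "0 \<le> g1 py my s s" unfolding gy using ge0[of s] U(1)[OF s] by auto
    fix t :: real assume t: "t \<in> {0<..<1}"
    consider "s \<le> t0" | "t0 < s" "s < t1" | "t1 \<le> s" "t0 < s" by linarith
    then show "g1 py my s t \<le> g1 py my s s"
    proof cases
      case 1
      have "g1 p m s t \<le> 0" if "t1 \<le> t"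
      proof (cases "s < t1")
        case True
        then show ?thesis using ic1_gain_mono[OF ic, of s t1 t] s t that le0[OF 1] by auto
      next
        case False
        then have "s = t1" "t0 = t1" using 1 t01 by auto
        then show ?thesis using U(2)[OF s t] sgn[of s] by simp
      qed
      then show ?thesis unfolding gy using 1 le0[OF 1] by auto
    next
      case 2
      have "g1 p m s t \<le> g1 p m s t1" if "t1 \<le> t"
        using ic1_gain_mono[OF ic, of s t1 t] s t that 2 by auto
      then show ?thesis unfolding gy using 2 ge0[of s] by auto
    next
      case 3
      then show ?thesis unfolding gy using U[OF s] U(2)[OF s t] t1 t01 ge0[of s] t by auto
    qed
  qed
  then show ?thesis unfolding ic1_def py_def[symmetric] my_def[symmetric] by blast
qed

lemma set_integral_pos_interval:
  fixes G :: "real \<Rightarrow> real"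
  assumes int: "set_integrable lborel A G" and A: "A \<in> sets lborel"
    and nn: "\<And>x. x \<in> A \<Longrightarrow> 0 \<le> G x" and sub: "{a<..<b} \<subseteq> A" and ab: "a < b"
    and pos: "\<And>x. x \<in> {a<..<b} \<Longrightarrow> 0 < G x"
  shows "0 < (LINT x:A|lborel. G x)"
proof -
  have i: "integrable lborel (\<lambda>x. indicator A x * G x)"
    using int unfolding set_integrable_def by simp
  have nn': "AE x in lborel. 0 \<le> indicator A x * G x"
    using nn by (auto split: split_indicator)
  have ge: "0 \<le> (LINT x:A|lborel. G x)"
    unfolding set_lebesgue_integral_def using nn' by (simp add: integral_nonneg_AE)
  have "(LINT x:A|lborel. G x) \<noteq> 0"
  proof
    assume "(LINT x:A|lborel. G x) = 0"
    then have "integral\<^sup>L lborel (\<lambda>x. indicator A x * G x) = 0"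
      unfolding set_lebesgue_integral_def by simp
    then have "AE x in lborel. indicator A x * G x = 0"
      using integral_nonneg_eq_0_iff_AE[OF i nn'] by simp
    then have "AE x in lborel. x \<notin> {a<..<b}"
      by eventually_elim (use sub pos in \<open>fastforce split: split_indicator\<close>)
    then obtain N where N: "{x \<in> space lborel. \<not> x \<notin> {a<..<b}} \<subseteq> N" "emeasure lborel N = 0" "N \<in> sets lborel"
      by (rule AE_E)
    have "emeasure lborel {a<..<b} \<le> emeasure lborel N"
      using N by (intro emeasure_mono) auto
    then show False using N ab by (simp add: emeasure_lborel_Ioo)
  qed
  then show ?thesis using ge by simp
qed

lemma fubini_tri:
  fixes k h :: "real \<Rightarrow> real"
  assumes k: "integrable lborel k" and hm: "h \<in> borel_measurable borel"
    and hb: "\<And>r. r \<in> {0<..<1} \<Longrightarrow> \<bar>h r\<bar> \<le> C" and t1: "0 < t1" "t1 < 1"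
  shows "(LINT s:{0<..t1}|lborel. k s * (LINT r:{0<..s}|lborel. h r))
       = (LINT r:{0<..t1}|lborel. h r * (LINT s:{r..t1}|lborel. k s))"
    and "set_integrable lborel {0<..t1} (\<lambda>r. h r * (LINT s:{r..t1}|lborel. k s))"
proof -
  define F where "F s r = (if 0 < r \<and> r \<le> s \<and> s \<le> t1 then k s * h r else 0)" for s r
  have km: "k \<in> borel_measurable borel" using k by auto
  have Fm: "case_prod F \<in> borel_measurable (lborel \<Otimes>\<^sub>M lborel)"
    unfolding F_def using km hm by measurable
  define B where "B s r = \<bar>k s\<bar> * (\<bar>C\<bar> * indicator {0<..<1::real} r)" for s r :: real
  have m01: "emeasure lborel {0<..<1::real} = ennreal 1" by (subst emeasure_lborel_Ioo) auto
  have Bint: "integrable (lborel \<Otimes>\<^sub>M lborel) (case_prod B)"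
  proof (rule lborel_pair.Fubini_integrable)
    show "case_prod B \<in> borel_measurable (lborel \<Otimes>\<^sub>M lborel)" unfolding B_def using km by measurable
    have "(\<lambda>s. \<integral>r. norm (case_prod B (s, r)) \<partial>lborel) = (\<lambda>s. \<bar>k s\<bar> * \<bar>C\<bar>)"
      using m01 by (auto simp: B_def abs_mult measure_def)
    then show "integrable lborel (\<lambda>s. \<integral>r. norm (case_prod B (s, r)) \<partial>lborel)"
      using k by simp
    show "AE s in lborel. integrable lborel (\<lambda>r. case_prod B (s, r))"
      using m01 by (auto simp: B_def integrable_indicator_iff)
  qed
  have Fint: "integrable (lborel \<Otimes>\<^sub>M lborel) (case_prod F)"
  proof (rule Bochner_Integration.integrable_bound[OF Bint Fm])
    show "AE x in lborel \<Otimes>\<^sub>M lborel. norm (case_prod F x) \<le> norm (case_prod B x)"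
    proof (rule AE_I2, clarify)
      fix s r
      show "norm (F s r) \<le> norm (B s r)"
      proof (cases "0 < r \<and> r \<le> s \<and> s \<le> t1")
        case True
        then have "\<bar>h r\<bar> \<le> \<bar>C\<bar>" using hb[of r] t1 by auto
        then show ?thesis using True t1 unfolding F_def B_def
          by (auto simp: abs_mult intro!: mult_left_mono)
      qed (auto simp: F_def B_def)
    qed
  qed
  have inner_r: "(\<integral>r. F s r \<partial>lborel) = indicator {0<..t1} s * (k s * (LINT r:{0<..s}|lborel. h r))" for s
  proof (cases "0 < s \<and> s \<le> t1")
    case True
    have "(\<integral>r. F s r \<partial>lborel) = (\<integral>r. k s * (indicator {0<..s} r * h r) \<partial>lborel)"
      using True by (intro Bochner_Integration.integral_cong) (auto simp: F_def split: split_indicator)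
    then show ?thesis using True by (simp add: set_lebesgue_integral_def)
  next
    case False
    then have "F s = (\<lambda>r. 0)" by (auto simp: F_def fun_eq_iff)
    then show ?thesis using False by (auto split: split_indicator)
  qed
  have inner_s: "(\<integral>s. F s r \<partial>lborel) = indicator {0<..t1} r * (h r * (LINT s:{r..t1}|lborel. k s))" for r
  proof (cases "0 < r \<and> r \<le> t1")
    case True
    have "(\<integral>s. F s r \<partial>lborel) = (\<integral>s. h r * (indicator {r..t1} s * k s) \<partial>lborel)"
      using True by (intro Bochner_Integration.integral_cong) (auto simp: F_def split: split_indicator)
    then show ?thesis using True by (simp add: set_lebesgue_integral_def)
  next
    case False
    then have "(\<lambda>s. F s r) = (\<lambda>s. 0)" by (auto simp: F_def fun_eq_iff)
    then show ?thesis using False by (auto split: split_indicator)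
  qed
  have "(\<integral>r. (\<integral>s. F s r \<partial>lborel) \<partial>lborel) = (\<integral>s. (\<integral>r. F s r \<partial>lborel) \<partial>lborel)"
    by (rule lborel_pair.Fubini_integral[OF Fint])
  then show "(LINT s:{0<..t1}|lborel. k s * (LINT r:{0<..s}|lborel. h r))
       = (LINT r:{0<..t1}|lborel. h r * (LINT s:{r..t1}|lborel. k s))"
    unfolding inner_r inner_s by (simp add: set_lebesgue_integral_def)
  have "integrable lborel (\<lambda>r. \<integral>s. F s r \<partial>lborel)"
    by (rule lborel_pair.integrable_snd[OF Fint])
  then show "set_integrable lborel {0<..t1} (\<lambda>r. h r * (LINT s:{r..t1}|lborel. k s))"
    unfolding inner_s set_integrable_def by simp
qed

lemma int_f_bdd:
  fixes f b :: "real \<Rightarrow> real"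
  assumes f: "integrable lborel f" and b: "b \<in> borel_measurable borel" and A: "A \<in> sets lborel"
    and bb: "\<And>x. x \<in> A \<Longrightarrow> \<bar>b x\<bar> \<le> C"
  shows "set_integrable lborel A (\<lambda>x. f x * b x)"
  unfolding set_integrable_def
proof (rule Bochner_Integration.integrable_bound)
  show "integrable lborel (\<lambda>x. \<bar>C\<bar> * \<bar>f x\<bar>)" using f by auto
  show "(\<lambda>x. indicat_real A x *\<^sub>R (f x * b x)) \<in> borel_measurable lborel"
    using f b A by measurable
  show "AE x in lborel. norm (indicat_real A x *\<^sub>R (f x * b x)) \<le> norm (\<bar>C\<bar> * \<bar>f x\<bar>)"
  proof (rule AE_I2)
    fix x show "norm (indicat_real A x *\<^sub>R (f x * b x)) \<le> norm (\<bar>C\<bar> * \<bar>f x\<bar>)"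
    proof (cases "x \<in> A")
      case True
      then have "\<bar>b x\<bar> \<le> \<bar>C\<bar>" using bb by force
      then have "\<bar>f x\<bar> * \<bar>b x\<bar> \<le> \<bar>f x\<bar> * \<bar>C\<bar>" by (intro mult_left_mono) auto
      then show ?thesis using True by (simp add: abs_mult mult.commute)
    qed simp
  qed
qed

lemma core1d:
  fixes f p m :: "real \<Rightarrow> real"
  assumes ic: "ic1 p m" and meas: "p \<in> borel_measurable borel" "m \<in> borel_measurable borel"
    and bnd: "\<And>t. t \<in> {0<..<1} \<Longrightarrow> 0 \<le> p t \<and> p t \<le> 1 \<and> 0 \<le> m t \<and> m t \<le> 1"
    and fint: "integrable lborel f" and f0: "\<And>u. u \<notin> {0<..<1} \<Longrightarrow> f u = 0"
    and fpos: "\<And>u. u \<in> {0<..<1} \<Longrightarrow> 0 < f u"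
    and phi: "\<And>r r'. 0 < r \<Longrightarrow> r < r' \<Longrightarrow> r' \<le> \<delta> \<Longrightarrow> r * (1 - r) * f r < r' * (1 - r') * f r'"
    and \<delta>: "\<delta> \<le> 1/2"
    and t1: "0 < t1" "t1 \<le> \<delta>" "0 < m t1"
    and t0: "t0 = m t1 / (p t1 + m t1)"
    and \<sigma>: "0 < \<sigma>" "\<sigma> < t0" "0 < m \<sigma>"
    and py: "py = (\<lambda>t. if t \<le> t0 then 0 else if t < t1 then p t1 else p t)"
    and my: "my = (\<lambda>t. if t \<le> t0 then 0 else if t < t1 then m t1 else m t)"
  shows "ic1 py my"
    and "0 < (LINT s:{0<..<1}|lborel. f s * (s * (py s - p s) + (1 - s) * (my s - m s)))"
proof -
  have t1': "t1 < 1" using t1 \<delta> by linarith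
  have Qt1: "p t1 + m t1 > 0" using bnd[of t1] t1 t1' by auto
  show icy: "ic1 py my" unfolding py my by (rule ic1_trunc[OF ic t1(1) t1' Qt1 t0])
  have t01: "t0 \<le> t1"
  proof -
    have "0 \<le> g1 p m t1 t1" using ic t1 t1' unfolding ic1_def by auto
    then have "m t1 \<le> t1 * (p t1 + m t1)" unfolding g1_def by (simp add: algebra_simps)
    then show ?thesis using Qt1 t0 by (simp add: divide_le_eq)
  qed
  have t0pos: "0 < t0" using \<sigma> by linarith
  have bndy: "0 \<le> py t \<and> py t \<le> 1 \<and> 0 \<le> my t \<and> my t \<le> 1" if "t \<in> {0<..<1}" for t
    using bnd[OF that] bnd[of t1] t1 t1' unfolding py my by auto
  have pym: "py \<in> borel_measurable borel" unfolding py using meas by measurable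
  have mym: "my \<in> borel_measurable borel" unfolding my using meas by measurable
  define Q where "Q = (\<lambda>r. p r + m r)"
  define Qy where "Qy = (\<lambda>r. py r + my r)"
  define h where "h = (\<lambda>r. Qy r - Q r)"
  define H where "H = (\<lambda>s. LINT r:{0<..s}|lborel. h r)"
  have Qm: "Q \<in> borel_measurable borel" unfolding Q_def using meas by measurable
  have Qym: "Qy \<in> borel_measurable borel" unfolding Qy_def using pym mym by measurable
  have hm: "h \<in> borel_measurable borel" unfolding h_def using Qm Qym by measurable
  have QB: "\<bar>Q r\<bar> \<le> 2" "\<bar>Qy r\<bar> \<le> 2" if "r \<in> {0<..<1}" for r
    using bnd[OF that] bndy[OF that] unfolding Q_def Qy_def by auto
  have hb: "\<bar>h r\<bar> \<le> 4" if "r \<in> {0<..<1}" for r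
    using bnd[OF that] bndy[OF that] unfolding h_def Q_def Qy_def by auto
  have H_eq: "H s = g1 py my s s - g1 p m s s" if s: "s \<in> {0<..<1}" for s
  proof -
    have iQ: "set_integrable lborel {0<..s} Q"
      by (rule bdd_set_integrable[where C=2]) (use Qm s QB in \<open>auto\<close>)
    have iQy: "set_integrable lborel {0<..s} Qy"
      by (rule bdd_set_integrable[where C=2]) (use Qym s QB in \<open>auto\<close>)
    have "H s = (LINT r:{0<..s}|lborel. Qy r) - (LINT r:{0<..s}|lborel. Q r)"
      unfolding H_def h_def using iQ iQy by (simp add: set_integral_diff)
    also have "\<dots> = g1 py my s s - g1 p m s s"
      using ic1_envelope[OF ic meas bnd s] ic1_envelope[OF icy pym mym bndy s]
      unfolding Q_def Qy_def by simp
    finally show ?thesis .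
  qed
  have Ht1: "H t1 = 0"
  proof (cases "t1 \<le> t0")
    case True
    then have "t0 = t1" using t01 by simp
    then have "m t1 = t1 * (p t1 + m t1)" using t0 Qt1 by (simp add: field_simps)
    then have "g1 p m t1 t1 = 0" unfolding g1_def by (simp add: algebra_simps)
    moreover have "g1 py my t1 t1 = 0" using True unfolding g1_def py my by simp
    ultimately show ?thesis using H_eq[of t1] t1 t1' by simp
  next
    case False
    then have "g1 py my t1 t1 = g1 p m t1 t1" unfolding g1_def py my by simp
    then show ?thesis using H_eq[of t1] t1 t1' by simp
  qed
  define D where "D = (\<lambda>s. f s * (s * (py s - p s) + (1 - s) * (my s - m s)))"
  have Dm: "(\<lambda>s. s * (py s - p s) + (1 - s) * (my s - m s)) \<in> borel_measurable borel"
    using meas pym mym by measurable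
  have Dint: "set_integrable lborel A D" if "A \<in> sets lborel" "A \<subseteq> {0<..<1}" for A
    unfolding D_def
  proof (rule int_f_bdd[OF fint Dm that(1), where C=2])
    fix x assume "x \<in> A"
    then have x: "x \<in> {0<..<1}" using that by auto
    have a1: "\<bar>py x - p x\<bar> \<le> 1" "\<bar>my x - m x\<bar> \<le> 1" "\<bar>x\<bar> \<le> 1" "\<bar>1 - x\<bar> \<le> 1"
      using bnd[OF x] bndy[OF x] x by auto
    have "\<bar>x\<bar> * \<bar>py x - p x\<bar> \<le> 1 * 1" using a1 by (intro mult_mono) auto
    then have "\<bar>x * (py x - p x)\<bar> \<le> 1" by (simp add: abs_mult)
    moreover have "\<bar>1 - x\<bar> * \<bar>my x - m x\<bar> \<le> 1 * 1" using a1 by (intro mult_mono) auto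
    then have "\<bar>(1 - x) * (my x - m x)\<bar> \<le> 1" by (simp add: abs_mult)
    ultimately show "\<bar>x * (py x - p x) + (1 - x) * (my x - m x)\<bar> \<le> 2" by linarith
  qed
  have split01: "(LINT s:{0<..<1}|lborel. D s) = (LINT s:{0<..t1}|lborel. D s)"
  proof -
    have "{0<..<1} = {0<..t1} \<union> {t1<..<1}" using t1 t1' by auto
    then have "(LINT s:{0<..<1}|lborel. D s) = (LINT s:{0<..t1}|lborel. D s) + (LINT s:{t1<..<1}|lborel. D s)"
      using t1 t1' by (simp, intro set_integral_Un Dint) auto
    moreover have "(LINT s:{t1<..<1}|lborel. D s) = (LINT s:{t1<..<1}|lborel. 0)"
      using t01 by (intro set_lebesgue_integral_cong) (auto simp: D_def py my)
    ultimately show ?thesis by simp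
  qed
  have ident: "s * (a - b) + (1 - s) * (c - d) = ((a + c) - (b + d)) * (2 * s * (1 - s)) + (2 * s - 1) * ((s * a - (1 - s) * c) - (s * b - (1 - s) * d))" for s a b c d :: real
    by algebra
  have Dform: "D s = h s * (f s * (2 * s * (1 - s))) + (f s * (2 * s - 1)) * H s" if s: "s \<in> {0<..<1}" for s
  proof -
    have "D s = f s * (h s * (2 * s * (1 - s)) + (2 * s - 1) * H s)"
      unfolding D_def H_eq[OF s] h_def Q_def Qy_def g1_def ident[of s "py s" "p s" "my s" "m s"] by (simp only: add.commute)
    then show ?thesis by algebra
  qed
  define k where "k = (\<lambda>s. f s * (2 * s - 1))"
  have fm: "f \<in> borel_measurable borel" using fint by auto
  have kint: "integrable lborel k"
  proof (rule Bochner_Integration.integrable_bound[where f="\<lambda>s. \<bar>f s\<bar>"])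
    show "integrable lborel (\<lambda>s. \<bar>f s\<bar>)" using fint by auto
    show "k \<in> borel_measurable lborel" unfolding k_def using fm by measurable
    show "AE x in lborel. norm (k x) \<le> norm \<bar>f x\<bar>"
    proof (rule AE_I2)
      fix x show "norm (k x) \<le> norm \<bar>f x\<bar>"
      proof (cases "x \<in> {0<..<1}")
        case True
        then have "\<bar>2 * x - 1\<bar> \<le> 1" by auto
        then show ?thesis unfolding k_def by (simp add: abs_mult mult_left_le)
      qed (simp add: k_def f0)
    qed
  qed
  define K where "K = (\<lambda>r. LINT s:{r..t1}|lborel. k s)"
  have fub: "(LINT s:{0<..t1}|lborel. k s * H s) = (LINT r:{0<..t1}|lborel. h r * K r)"
    and fubi: "set_integrable lborel {0<..t1} (\<lambda>r. h r * K r)"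
    using fubini_tri[OF kint hm hb t1(1) t1'] unfolding H_def K_def by auto
  define w where "w = (\<lambda>r. f r * (2 * r * (1 - r)) + K r)"
  have i1: "set_integrable lborel {0<..t1} (\<lambda>s. h s * (f s * (2 * s * (1 - s))))"
  proof -
    have "set_integrable lborel {0<..t1} (\<lambda>s. f s * (2 * s * (1 - s) * h s))"
    proof (rule int_f_bdd[OF fint _ _, where C=4])
      show "(\<lambda>s. 2 * s * (1 - s) * h s) \<in> borel_measurable borel" using hm by measurable
      fix x assume x: "x \<in> {0<..t1}"
      then have x': "x \<in> {0<..<1}" using t1' by auto
      have e0: "0 \<le> 2 * x * (1 - x)" using x' by simp
      have e: "2 * x * (1 - x) = 1 - (x * x + (1 - x) * (1 - x))" by (simp add: algebra_simps)
      have "0 \<le> x * x + (1 - x) * (1 - x)" by simp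
      then have "\<bar>2 * x * (1 - x)\<bar> \<le> 1" using e e0 by linarith
      moreover have "\<bar>h x\<bar> \<le> 4" using hb[OF x'] .
      ultimately have "\<bar>2 * x * (1 - x)\<bar> * \<bar>h x\<bar> \<le> 1 * 4" by (intro mult_mono) auto
      then show "\<bar>2 * x * (1 - x) * h x\<bar> \<le> 4" by (simp add: abs_mult)
    qed auto
    then show ?thesis by (simp add: algebra_simps)
  qed
  have i2: "set_integrable lborel {0<..t1} (\<lambda>s. k s * H s)"
  proof -
    have "set_integrable lborel {0<..t1} D" using t1' by (intro Dint) auto
    moreover have "set_integrable lborel {0<..t1} D = set_integrable lborel {0<..t1} (\<lambda>s. h s * (f s * (2 * s * (1 - s))) + k s * H s)"
      using t1' by (intro set_integrable_cong) (auto simp: Dform k_def)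
    ultimately have "set_integrable lborel {0<..t1} (\<lambda>s. h s * (f s * (2 * s * (1 - s))) + k s * H s)" by simp
    from set_integral_diff(1)[OF this i1] show ?thesis by simp
  qed
  have hint: "set_integrable lborel {0<..t1} h"
    by (rule bdd_set_integrable[where C=4]) (use hm hb t1' in auto)
  have wint: "set_integrable lborel {0<..t1} (\<lambda>r. h r * w r)"
    unfolding w_def distrib_left using i1 fubi by (intro set_integral_add) auto
  have E1: "(LINT s:{0<..t1}|lborel. D s) = (LINT r:{0<..t1}|lborel. h r * w r)"
  proof -
    have "(LINT s:{0<..t1}|lborel. D s) = (LINT s:{0<..t1}|lborel. h s * (f s * (2 * s * (1 - s))) + k s * H s)"
      using t1' by (intro set_lebesgue_integral_cong) (auto simp: Dform k_def)
    also have "\<dots> = (LINT s:{0<..t1}|lborel. h s * (f s * (2 * s * (1 - s)))) + (LINT s:{0<..t1}|lborel. k s * H s)"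
      using i1 i2 by (simp add: set_integral_add)
    also have "\<dots> = (LINT s:{0<..t1}|lborel. h s * (f s * (2 * s * (1 - s)))) + (LINT r:{0<..t1}|lborel. h r * K r)"
      using fub by simp
    also have "\<dots> = (LINT r:{0<..t1}|lborel. h r * w r)"
      unfolding w_def distrib_left using i1 fubi by (simp add: set_integral_add)
    finally show ?thesis .
  qed
  define G where "G = (\<lambda>r. h r * (w r - w t0))"
  have Gint: "set_integrable lborel {0<..t1} G"
    unfolding G_def right_diff_distrib using wint hint by (intro set_integral_diff) auto
  have E2: "(LINT r:{0<..t1}|lborel. h r * w r) = (LINT r:{0<..t1}|lborel. G r)"
  proof -
    have "(LINT r:{0<..t1}|lborel. G r) = (LINT r:{0<..t1}|lborel. h r * w r) - (LINT r:{0<..t1}|lborel. h r * w t0)"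
      unfolding G_def right_diff_distrib using wint hint by (intro set_integral_diff) auto
    moreover have "(LINT r:{0<..t1}|lborel. h r * w t0) = w t0 * H t1"
      unfolding H_def by simp
    ultimately show ?thesis using Ht1 by simp
  qed
  have fnn: "0 \<le> f u" for u using fpos[of u] f0[of u] by (cases "u \<in> {0<..<1}") auto
  have Kmono: "K r \<le> K r'" if "r \<le> r'" for r r'
  proof -
    have "(\<integral>s. indicator {r..t1} s * k s \<partial>lborel) \<le> (\<integral>s. indicator {r'..t1} s * k s \<partial>lborel)"
    proof (rule integral_mono)
      show "integrable lborel (\<lambda>s. indicat_real {r..t1} s * k s)"
        using integrable_real_mult_indicator[OF _ kint, of "{r..t1}"] by (simp add: mult.commute)
      show "integrable lborel (\<lambda>s. indicat_real {r'..t1} s * k s)"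
        using integrable_real_mult_indicator[OF _ kint, of "{r'..t1}"] by (simp add: mult.commute)
      fix s
      show "indicat_real {r..t1} s * k s \<le> indicat_real {r'..t1} s * k s"
      proof (cases "s \<in> {r..t1}")
        case True
        show ?thesis
        proof (cases "s \<in> {r'..t1}")
          case False
          then have "2 * s - 1 \<le> 0" using True t1 \<delta> by auto
          then have "k s \<le> 0" unfolding k_def using fnn[of s] by (simp add: mult_nonneg_nonpos)
          then show ?thesis using True False by simp
        qed (use True in simp)
      next
        case False
        then have "s \<notin> {r'..t1}" using that by auto
        then show ?thesis using False by simp
      qed
    qed
    then show ?thesis unfolding K_def set_lebesgue_integral_def by simp
  qed
  have wmono: "w r < w r'" if "0 < r" "r < r'" "r' \<le> \<delta>" for r r'
  proof -
    have "r * (1 - r) * f r < r' * (1 - r') * f r'" using phi that by blast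
    then have "f r * (2 * r * (1 - r)) < f r' * (2 * r' * (1 - r'))" by (simp add: algebra_simps)
    then show ?thesis unfolding w_def using Kmono[of r r'] that by simp
  qed
  have Gnn: "0 \<le> G r" if r: "r \<in> {0<..t1}" for r
  proof -
    have r': "r \<in> {0<..<1}" using r t1' by auto
    consider "r \<le> t0" | "t0 < r" "r < t1" | "t0 < r" "r = t1" using r by fastforce
    then show ?thesis
    proof cases
      case 1
      have "h r \<le> 0" using 1 bnd[OF r'] unfolding h_def Qy_def Q_def py my by auto
      moreover have "w r \<le> w t0" using wmono[of r t0] 1 r t01 t1 by (cases "r = t0") auto
      ultimately show ?thesis unfolding G_def by (simp add: mult_nonpos_nonpos)
    next
      case 2
      have "Q r \<le> Q t1" unfolding Q_def using ic1_Q_mono[OF ic, of r t1] r 2 t1' by auto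
      then have "h r \<ge> 0" using 2 unfolding h_def Qy_def Q_def py my by auto
      moreover have "w t0 \<le> w r" using wmono[of t0 r] 2 t0pos t1 by auto
      ultimately show ?thesis unfolding G_def by simp
    next
      case 3
      then have "h r = 0" unfolding h_def Qy_def Q_def py my by auto
      then show ?thesis unfolding G_def by simp
    qed
  qed
  have Gpos: "0 < G r" if r: "r \<in> {\<sigma><..<t0}" for r
  proof -
    have r': "r \<in> {0<..<1}" using r \<sigma> t01 t1' by auto
    have "Q \<sigma> \<le> Q r" unfolding Q_def using ic1_Q_mono[OF ic, of \<sigma> r] r \<sigma> r' by auto
    moreover have "0 < Q \<sigma>" using bnd[of \<sigma>] \<sigma> r' r unfolding Q_def by auto
    ultimately have "h r < 0" using r unfolding h_def Qy_def Q_def py my by auto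
    moreover have "w r < w t0" using wmono[of r t0] r \<sigma> t01 t1 by auto
    ultimately show ?thesis unfolding G_def by (simp add: mult_neg_neg)
  qed
  have "0 < (LINT r:{0<..t1}|lborel. G r)"
    by (rule set_integral_pos_interval[OF Gint _ Gnn _ \<sigma>(2) Gpos]) (use \<sigma> t01 in auto)
  then show "0 < (LINT s:{0<..<1}|lborel. f s * (s * (py s - p s) + (1 - s) * (my s - m s)))"
    using split01 E1 E2 unfolding D_def by simp
qed




locale dens =
  fixes fp fm :: "real \<Rightarrow> real"
  assumes measp: "fp \<in> borel_measurable borel" and measm: "fm \<in> borel_measurable borel"
    and nonneg: "\<forall>u. 0 \<le> fp u \<and> 0 \<le> fm u"
    and intp: "integrable lborel fp" and intm: "integrable lborel fm"
    and probp: "(\<integral>u. fp u \<partial>lborel) = 1" and probm: "(\<integral>u. fm u \<partial>lborel) = 1"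
    and normalized: "\<forall>u\<in>{0<..<1}. fp u / (fp u + fm u) = u"
    and support: "\<forall>u. 0 < mixf fp fm u \<longleftrightarrow> u \<in> {0<..<1}"
    and diff: "\<forall>u\<in>{0<..<1}. mixf fp fm differentiable (at u)"
    and bounded_ratio: "\<exists>B. \<forall>u\<in>{0<..<1}. \<bar>deriv (mixf fp fm) u / mixf fp fm u\<bar> \<le> B"
begin

abbreviation "f \<equiv> mixf fp fm"

lemma fpos: "u \<in> {0<..<1} \<Longrightarrow> 0 < f u"
  using support by auto

lemma out: "u \<notin> {0<..<1} \<Longrightarrow> fp u = 0 \<and> fm u = 0 \<and> f u = 0"
proof -
  assume u: "u \<notin> {0<..<1}"
  then have "\<not> 0 < f u" using support by auto
  then have "fp u + fm u \<le> 0" unfolding mixf_def by simp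
  moreover have "0 \<le> fp u" "0 \<le> fm u" using nonneg by auto
  ultimately have "fp u = 0" "fm u = 0" by linarith+
  then show ?thesis unfolding mixf_def by simp
qed

lemma fp_eq: "u \<in> {0<..<1} \<Longrightarrow> fp u = 2 * u * f u"
proof -
  assume u: "u \<in> {0<..<1}"
  have "fp u + fm u > 0" using fpos[OF u] unfolding mixf_def by simp
  moreover have "fp u / (fp u + fm u) = u" using normalized u by auto
  ultimately have "fp u = u * (fp u + fm u)" by (simp add: divide_eq_eq)
  then show ?thesis unfolding mixf_def by simp
qed

lemma fm_eq: "u \<in> {0<..<1} \<Longrightarrow> fm u = 2 * (1 - u) * f u"
proof -
  assume u: "u \<in> {0<..<1}"
  have "fp u + fm u = 2 * f u" unfolding mixf_def by simp
  then show ?thesis using fp_eq[OF u] by (simp add: algebra_simps)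
qed

lemma fm_pos: "u \<in> {0<..<1} \<Longrightarrow> 0 < fm u"
  using fm_eq fpos by simp

lemma fp_pos: "u \<in> {0<..<1} \<Longrightarrow> 0 < fp u"
  using fp_eq fpos by simp

lemma f_int: "integrable lborel f"
  unfolding mixf_def[abs_def] using intp intm by auto

lemma f_nn: "0 \<le> f u"
  using nonneg unfolding mixf_def by (simp add: add_nonneg_nonneg)

lemma phi_mono: "\<exists>\<delta>>0. \<delta> \<le> 1/2 \<and> (\<forall>r r'. 0 < r \<longrightarrow> r < r' \<longrightarrow> r' \<le> \<delta> \<longrightarrow> r * (1 - r) * f r < r' * (1 - r') * f r')"
proof -
  obtain B where B: "\<And>u. u \<in> {0<..<1} \<Longrightarrow> \<bar>deriv f u / f u\<bar> \<le> B" using bounded_ratio by blast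
  have h: "(1/2::real) \<in> {0<..<1}" by simp
  have B0: "0 \<le> B" using B[OF h] abs_ge_zero[of "deriv f (1/2) / f (1/2)"] by linarith
  define \<delta> where "\<delta> = 1 / (4 + 2 * B)"
  have \<delta>0: "0 < \<delta>" unfolding \<delta>_def using B0 by simp
  have \<delta>1: "\<delta> \<le> 1/4" unfolding \<delta>_def using B0 by (simp add: field_simps)
  have "r * (1 - r) * f r < r' * (1 - r') * f r'" if "0 < r" "r < r'" "r' \<le> \<delta>" for r r'
  proof (rule DERIV_pos_imp_increasing[OF that(2)])
    fix x assume x: "r \<le> x" "x \<le> r'"
    then have x01: "x \<in> {0<..<1}" using that \<delta>1 by auto
    have d: "DERIV f x :> deriv f x" using diff x01 DERIV_deriv_iff_real_differentiable by blast
    have fx: "0 < f x" using fpos[OF x01] .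
    have "deriv f x / f x \<ge> - B" using B[OF x01] abs_le_iff[of "deriv f x / f x" B] by linarith
    then have dB: "deriv f x \<ge> - B * f x" using fx by (simp add: pos_le_divide_eq)
    have D: "DERIV (\<lambda>x. x * (1 - x) * f x) x :> (1 - 2 * x) * f x + x * (1 - x) * deriv f x"
      by (auto intro!: derivative_eq_intros d simp: algebra_simps)
    have xB: "x * (2 + B) \<le> 1/2"
    proof -
      have "x * (2 + B) \<le> \<delta> * (2 + B)" using x that B0 by (intro mult_right_mono) auto
      also have "\<dots> = 1/2" unfolding \<delta>_def using B0 by (simp add: field_simps)
      finally show ?thesis .
    qed
    have "x * (1 - x) * deriv f x \<ge> x * (1 - x) * (- B * f x)"
      using dB x01 by (intro mult_left_mono) auto
    moreover have "x * (1 - x) * (- B * f x) \<ge> - (x * B) * f x"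
    proof -
      have "x * (1 - x) \<le> x * 1" using x01 by (intro mult_left_mono) auto
      then have "x * (1 - x) * B \<le> x * B" using B0 by (metis mult.right_neutral mult_right_mono)
      then have "x * (1 - x) * B * f x \<le> x * B * f x" using fx by (rule mult_right_mono[OF _ less_imp_le])
      then show ?thesis by (simp add: algebra_simps)
    qed
    ultimately have "(1 - 2 * x) * f x + x * (1 - x) * deriv f x \<ge> (1 - 2 * x - x * B) * f x"
      by (simp add: algebra_simps)
    moreover have "1 - 2 * x - x * B \<ge> 1/2" using xB by (simp add: algebra_simps)
    ultimately have "(1 - 2 * x) * f x + x * (1 - x) * deriv f x \<ge> 1/2 * f x"
      using fx by (smt (verit) mult_right_mono)
    then show "\<exists>y. DERIV (\<lambda>x. x * (1 - x) * f x) x :> y \<and> 0 < y" using D fx by force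
  qed
  then show ?thesis using \<delta>0 \<delta>1 by (intro exI[of _ \<delta>]) auto
qed

end

lemma psf: "product_sigma_finite (\<lambda>_::'a. lborel)"
  by (simp add: product_sigma_finite_def lborel.sigma_finite_measure_axioms)

lemma fpsf: "finite_product_sigma_finite (\<lambda>_::'a. lborel) (J :: 'a set)" if "finite J"
  using that psf by (simp add: finite_product_sigma_finite_def finite_product_sigma_finite_axioms_def)

lemma sfPiM: "sigma_finite_measure (PiM (J::'a set) (\<lambda>_. lborel))" if "finite J"
proof -
  interpret finite_product_sigma_finite "\<lambda>_::'a. lborel" J by (rule fpsf[OF that])
  show ?thesis by (rule sigma_finite_measure_axioms)
qed

lemma meas_upd_const: "(\<lambda>r::'a \<Rightarrow> real. r(i := t)) \<in> measurable (PiM (UNIV - {i}) (\<lambda>_. lborel)) (PiM UNIV (\<lambda>_. lborel))"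
  by (rule measurable_fun_upd[where J="UNIV - {i}"]) auto

lemma meas_upd_const': "(\<lambda>r::'a \<Rightarrow> real. r(i := t)) \<in> measurable (PiM UNIV (\<lambda>_. lborel)) (PiM UNIV (\<lambda>_. lborel))"
  by (rule measurable_fun_upd[where J="UNIV"]) auto

lemma meas_upd_pair: "(\<lambda>p::real \<times> ('a \<Rightarrow> real). (snd p)(i := fst p)) \<in> measurable (lborel \<Otimes>\<^sub>M PiM (UNIV - {i}) (\<lambda>_. lborel)) (PiM UNIV (\<lambda>_. lborel))"
  by (rule measurable_fun_upd[where J="UNIV - {i}"]) auto

definition Pg :: "(real \<Rightarrow> real) \<Rightarrow> (('a::finite \<Rightarrow> real) \<Rightarrow> 'a \<Rightarrow> real) \<Rightarrow> 'a \<Rightarrow> real \<Rightarrow> real" where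
  "Pg g x i t = (\<integral>r. (\<Prod>k\<in>UNIV - {i}. g (r k)) * x (r(i := t)) i \<partial>PiM (UNIV - {i}) (\<lambda>_. lborel))"

lemma sig_upd: "sig_profile (r(i := t))" if "\<forall>k\<in>UNIV - {i}. r k \<in> {0<..<1}" "t \<in> {0<..<1}"
  using that unfolding sig_profile_def by auto

context dens
begin

lemma prod_int: "integrable (PiM (J::'a::finite set) (\<lambda>_. lborel)) (\<lambda>r. \<Prod>k\<in>J. g (r k))"
  and prod_integral: "(\<integral>r. (\<Prod>k\<in>J. g (r k)) \<partial>PiM J (\<lambda>_. lborel)) = 1"
  if that: "g = fp \<or> g = fm"
proof -
  interpret product_sigma_finite "\<lambda>_::'a. lborel" by (rule psf)
  have gi: "integrable lborel g" and g1: "integral\<^sup>L lborel g = 1" using that intp intm probp probm by auto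
  show "integrable (PiM J (\<lambda>_. lborel)) (\<lambda>r. \<Prod>k\<in>J. g (r k))"
    using product_integrable_prod[of J "\<lambda>_. g"] gi by simp
  show "(\<integral>r. (\<Prod>k\<in>J. g (r k)) \<partial>PiM J (\<lambda>_. lborel)) = 1"
    using product_integral_prod[of J "\<lambda>_. g"] gi g1 by simp
qed

lemma g_nn: "g = fp \<or> g = fm \<Longrightarrow> 0 \<le> g u"
  using nonneg by auto

lemma g_out: "g = fp \<or> g = fm \<Longrightarrow> u \<notin> {0<..<1} \<Longrightarrow> g u = 0"
  using out by auto

lemma integrand_bnd:
  assumes x: "is_mechanism x" and g: "g = fp \<or> g = fm" and t: "t \<in> {0<..<1}"
  shows "0 \<le> (\<Prod>k\<in>UNIV - {i}. g (r k)) * x (r(i := t)) i \<and>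
         (\<Prod>k\<in>UNIV - {i}. g (r k)) * x (r(i := t)) i \<le> (\<Prod>k\<in>UNIV - {i}. g (r k))"
proof (cases "\<forall>k\<in>UNIV - {i}. r k \<in> {0<..<1}")
  case True
  then have "0 \<le> x (r(i := t)) i \<and> x (r(i := t)) i \<le> 1"
    using x sig_upd[OF True t] unfolding is_mechanism_def by blast
  moreover have "0 \<le> (\<Prod>k\<in>UNIV - {i}. g (r k))" using g_nn[OF g] by (simp add: prod_nonneg)
  ultimately show ?thesis by (simp add: mult_left_le)
next
  case False
  then obtain k where "k \<in> UNIV - {i}" "r k \<notin> {0<..<1}" by blast
  then have z: "(\<Prod>k\<in>UNIV - {i}. g (r k)) = 0" using g_out[OF g] by (intro prod_zero) auto
  show ?thesis unfolding z by simp
qed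

lemma integrand_meas:
  assumes x: "is_mechanism x" and that: "g \<in> borel_measurable borel"
  shows "(\<lambda>r. (\<Prod>k\<in>UNIV - {i}. g (r k)) * x (r(i := t)) i) \<in> borel_measurable (PiM (UNIV - {i}) (\<lambda>_. lborel))"
proof -
  have xm: "(\<lambda>s. x s i) \<in> borel_measurable (PiM UNIV (\<lambda>_. lborel))" using x unfolding is_mechanism_def by blast
  have "(\<lambda>r. x (r(i := t)) i) \<in> borel_measurable (PiM (UNIV - {i}) (\<lambda>_. lborel))"
    using measurable_comp[OF meas_upd_const xm] by (simp add: comp_def)
  then show ?thesis using that by measurable
qed

lemma integrand_int:
  assumes x: "is_mechanism x" and g: "g = fp \<or> g = fm" and t: "t \<in> {0<..<1}"
  shows "integrable (PiM (UNIV - {i}) (\<lambda>_. lborel)) (\<lambda>r. (\<Prod>k\<in>UNIV - {i}. g (r k)) * x (r(i := t)) i)"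
proof (rule Bochner_Integration.integrable_bound[OF prod_int[OF g]])
  show "(\<lambda>r. (\<Prod>k\<in>UNIV - {i}. g (r k)) * x (r(i := t)) i) \<in> borel_measurable (PiM (UNIV - {i}) (\<lambda>_. lborel))"
    using integrand_meas[OF x] g measp measm by auto
  show "AE r in PiM (UNIV - {i}) (\<lambda>_. lborel). norm ((\<Prod>k\<in>UNIV - {i}. g (r k)) * x (r(i := t)) i) \<le> norm (\<Prod>k\<in>UNIV - {i}. g (r k))"
  proof (rule AE_I2)
    fix r :: "'a \<Rightarrow> real"
    have "0 \<le> (\<Prod>k\<in>UNIV - {i}. g (r k))" using g_nn[OF g] by (simp add: prod_nonneg)
    then show "norm ((\<Prod>k\<in>UNIV - {i}. g (r k)) * x (r(i := t)) i) \<le> norm (\<Prod>k\<in>UNIV - {i}. g (r k))"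
      using integrand_bnd[OF x g t, of r] by simp
  qed
qed

lemma Pg_bnd:
  assumes x: "is_mechanism x" and g: "g = fp \<or> g = fm" and t: "t \<in> {0<..<1}"
  shows "0 \<le> Pg g x i t \<and> Pg g x i t \<le> 1"
proof
  show "0 \<le> Pg g x i t" unfolding Pg_def
    using integrand_bnd[OF x g t] by (intro integral_nonneg_AE AE_I2) auto
  have "Pg g x i t \<le> (\<integral>r. (\<Prod>k\<in>UNIV - {i}. g (r k)) \<partial>PiM (UNIV - {i}) (\<lambda>_. lborel))"
    unfolding Pg_def using integrand_bnd[OF x g t] integrand_int[OF x g t] prod_int[OF g]
    by (intro integral_mono) auto
  then show "Pg g x i t \<le> 1" using prod_integral[OF g, of "UNIV - {i}"] by linarith
qed

lemma cond_gain_eq: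
  assumes x: "is_mechanism x" and t: "t \<in> {0<..<1}"
  shows "cond_gain fp fm x i si t = si * Pg fp x i t - (1 - si) * Pg fm x i t"
proof -
  have "cond_gain fp fm x i si t =
    (\<integral>r. si * ((\<Prod>k\<in>UNIV - {i}. fp (r k)) * x (r(i := t)) i) - (1 - si) * ((\<Prod>k\<in>UNIV - {i}. fm (r k)) * x (r(i := t)) i) \<partial>PiM (UNIV - {i}) (\<lambda>_. lborel))"
    unfolding cond_gain_def by (simp add: algebra_simps)
  also have "\<dots> = si * Pg fp x i t - (1 - si) * Pg fm x i t"
    unfolding Pg_def using integrand_int[OF x _ t, of fp] integrand_int[OF x _ t, of fm] by simp
  finally show ?thesis .
qed

lemma Pg_meas:
  assumes x: "is_mechanism x" and g: "g = fp \<or> g = fm"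
  shows "(\<lambda>t. Pg g x i t) \<in> borel_measurable borel"
proof -
  interpret sigma_finite_measure "PiM (UNIV - {i}) (\<lambda>_::'a. lborel)" by (rule sfPiM) simp
  have xm: "(\<lambda>s. x s i) \<in> borel_measurable (PiM UNIV (\<lambda>_. lborel))" using x unfolding is_mechanism_def by blast
  have gm: "g \<in> borel_measurable borel" using g measp measm by auto
  have "(\<lambda>p. x ((snd p)(i := fst p)) i) \<in> borel_measurable (lborel \<Otimes>\<^sub>M PiM (UNIV - {i}) (\<lambda>_. lborel))"
    using measurable_comp[OF meas_upd_pair xm] by (simp add: comp_def)
  then have "case_prod (\<lambda>t r. (\<Prod>k\<in>UNIV - {i}. g (r k)) * x (r(i := t)) i) \<in> borel_measurable (lborel \<Otimes>\<^sub>M PiM (UNIV - {i}) (\<lambda>_. lborel))"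
    using gm by (simp add: case_prod_beta') measurable
  from borel_measurable_lebesgue_integral[OF this]
  show ?thesis unfolding Pg_def by simp
qed


lemma prod_upd: "(\<Prod>k\<in>UNIV. g ((y(i := t)) k)) = g t * (\<Prod>k\<in>UNIV - {i}. g (y k))"
  for y :: "'a::finite \<Rightarrow> real" and g :: "real \<Rightarrow> real"
proof -
  have "(\<Prod>k\<in>UNIV. g ((y(i := t)) k)) = g ((y(i := t)) i) * (\<Prod>k\<in>UNIV - {i}. g ((y(i := t)) k))"
    by (rule prod.remove) auto
  also have "(\<Prod>k\<in>UNIV - {i}. g ((y(i := t)) k)) = (\<Prod>k\<in>UNIV - {i}. g (y k))"
    by (rule prod.cong) auto
  finally show ?thesis by simp
qed

lemma full_bnd:
  fixes s :: "'a::finite \<Rightarrow> real"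
  assumes x: "is_mechanism x"
  shows "0 \<le> ((\<Prod>k\<in>UNIV. fp (s k)) + (\<Prod>k\<in>UNIV. fm (s k))) / 2 * x s i \<and>
    ((\<Prod>k\<in>UNIV. fp (s k)) + (\<Prod>k\<in>UNIV. fm (s k))) / 2 * x s i \<le> ((\<Prod>k\<in>UNIV. fp (s k)) + (\<Prod>k\<in>UNIV. fm (s k))) / 2"
proof (cases "sig_profile s")
  case True
  then have "0 \<le> x s i \<and> x s i \<le> 1" using x unfolding is_mechanism_def by blast
  moreover have "0 \<le> ((\<Prod>k\<in>UNIV. fp (s k)) + (\<Prod>k\<in>UNIV. fm (s k))) / 2"
    using nonneg by (simp add: prod_nonneg add_nonneg_nonneg)
  ultimately show ?thesis by (simp add: mult_left_le)
next
  case False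
  then obtain k where "s k \<notin> {0<..<1}" unfolding sig_profile_def by blast
  then have z: "(\<Prod>k\<in>UNIV. fp (s k)) = 0" "(\<Prod>k\<in>UNIV. fm (s k)) = 0" using out by (auto intro!: prod_zero)
  show ?thesis unfolding z by simp
qed

lemma ea_eq:
  assumes x: "is_mechanism x"
  shows "expected_alloc fp fm x i = (\<integral>t. (fp t * Pg fp x i t + fm t * Pg fm x i t) / 2 \<partial>lborel)"
proof -
  interpret product_sigma_finite "\<lambda>_::'a. lborel" by (rule psf)
  interpret sf: sigma_finite_measure "PiM (UNIV - {i}) (\<lambda>_::'a. lborel)" by (rule sfPiM) simp
  define F where "F s = ((\<Prod>k\<in>UNIV. fp (s k)) + (\<Prod>k\<in>UNIV. fm (s k))) / 2 * x s i" for s :: "'a \<Rightarrow> real"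
  have xm: "(\<lambda>s. x s i) \<in> borel_measurable (PiM UNIV (\<lambda>_. lborel))" using x unfolding is_mechanism_def by blast
  have Fm: "F \<in> borel_measurable (PiM UNIV (\<lambda>_. lborel))"
    unfolding F_def[abs_def] using xm measp measm by measurable
  have Fint: "integrable (PiM UNIV (\<lambda>_. lborel)) F"
  proof (rule Bochner_Integration.integrable_bound[OF _ Fm])
    show "integrable (PiM UNIV (\<lambda>_. lborel)) (\<lambda>s::'a \<Rightarrow> real. ((\<Prod>k\<in>UNIV. fp (s k)) + (\<Prod>k\<in>UNIV. fm (s k))) / 2)"
      using prod_int[of fp "UNIV::'a set"] prod_int[of fm "UNIV::'a set"] by (intro integrable_divide Bochner_Integration.integrable_add) auto
    show "AE s in PiM (UNIV::'a set) (\<lambda>_. lborel). norm (F s) \<le> norm (((\<Prod>k\<in>UNIV. fp (s k)) + (\<Prod>k\<in>UNIV. fm (s k))) / 2)"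
      using full_bnd[OF x] unfolding F_def by (intro AE_I2) (smt (verit, best) real_norm_def)
  qed
  have U: "(UNIV :: 'a set) = {i} \<union> (UNIV - {i})" by auto
  have mg: "merge {i} (UNIV - {i}) (z, y) = y(i := z i)" for z y :: "'a \<Rightarrow> real"
    by (auto simp: merge_def fun_eq_iff)
  define G where "G t = (\<integral>y. F (y(i := t)) \<partial>PiM (UNIV - {i}) (\<lambda>_. lborel))" for t
  have Gm: "G \<in> borel_measurable lborel"
  proof -
    have "(\<lambda>p. F ((snd p)(i := fst p))) \<in> borel_measurable (lborel \<Otimes>\<^sub>M PiM (UNIV - {i}) (\<lambda>_. lborel))"
      using measurable_comp[OF meas_upd_pair Fm] by (simp add: comp_def)
    then have "case_prod (\<lambda>t y. F (y(i := t))) \<in> borel_measurable (lborel \<Otimes>\<^sub>M PiM (UNIV - {i}) (\<lambda>_. lborel))"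
      by (simp add: case_prod_beta')
    from sf.borel_measurable_lebesgue_integral[OF this] show ?thesis unfolding G_def by simp
  qed
  have "expected_alloc fp fm x i = integral\<^sup>L (PiM ({i} \<union> (UNIV - {i})) (\<lambda>_. lborel)) F"
    unfolding expected_alloc_def F_def[abs_def] using U by simp
  also have "\<dots> = (\<integral>z. (\<integral>y. F (merge {i} (UNIV - {i}) (z, y)) \<partial>PiM (UNIV - {i}) (\<lambda>_. lborel)) \<partial>PiM {i} (\<lambda>_. lborel))"
    using Fint U by (intro product_integral_fold) auto
  also have "\<dots> = (\<integral>z. G (z i) \<partial>PiM {i} (\<lambda>_. lborel))"
    unfolding mg G_def by simp
  also have "\<dots> = integral\<^sup>L lborel G"
    using Gm by (intro product_integral_singleton) simp
  also have "\<dots> = (\<integral>t. (fp t * Pg fp x i t + fm t * Pg fm x i t) / 2 \<partial>lborel)"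
  proof (rule Bochner_Integration.integral_cong[OF refl])
    fix t
    show "G t = (fp t * Pg fp x i t + fm t * Pg fm x i t) / 2"
    proof (cases "t \<in> {0<..<1}")
      case True
      have "G t = (\<integral>y. fp t / 2 * ((\<Prod>k\<in>UNIV - {i}. fp (y k)) * x (y(i := t)) i) + fm t / 2 * ((\<Prod>k\<in>UNIV - {i}. fm (y k)) * x (y(i := t)) i) \<partial>PiM (UNIV - {i}) (\<lambda>_. lborel))"
        unfolding G_def F_def prod_upd by (simp add: algebra_simps add_divide_distrib)
      also have "\<dots> = fp t / 2 * Pg fp x i t + fm t / 2 * Pg fm x i t"
        unfolding Pg_def using integrand_int[OF x _ True, of fp] integrand_int[OF x _ True, of fm] by simp
      finally show ?thesis by (simp add: add_divide_distrib)
    next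
      case False
      then have "fp t = 0" "fm t = 0" using out by auto
      then show ?thesis unfolding G_def F_def prod_upd by simp
    qed
  qed
  finally show ?thesis .
qed


lemma A_int:
  assumes x: "is_mechanism x"
  shows "integrable lborel (\<lambda>t. (fp t * Pg fp x i t + fm t * Pg fm x i t) / 2)"
proof (rule Bochner_Integration.integrable_bound[where f="\<lambda>t. (fp t + fm t) / 2"])
  show "integrable lborel (\<lambda>t. (fp t + fm t) / 2)" using intp intm by auto
  show "(\<lambda>t. (fp t * Pg fp x i t + fm t * Pg fm x i t) / 2) \<in> borel_measurable lborel"
    using Pg_meas[OF x, of fp i] Pg_meas[OF x, of fm i] measp measm by simp
  show "AE t in lborel. norm ((fp t * Pg fp x i t + fm t * Pg fm x i t) / 2) \<le> norm ((fp t + fm t) / 2)"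
  proof (rule AE_I2)
    fix t show "norm ((fp t * Pg fp x i t + fm t * Pg fm x i t) / 2) \<le> norm ((fp t + fm t) / 2)"
    proof (cases "t \<in> {0<..<1}")
      case True
      have b1: "0 \<le> Pg fp x i t \<and> Pg fp x i t \<le> 1" "0 \<le> Pg fm x i t \<and> Pg fm x i t \<le> 1"
        using Pg_bnd[OF x _ True] by auto
      have n: "0 \<le> fp t" "0 \<le> fm t" using nonneg by auto
      have "fp t * Pg fp x i t \<le> fp t" "fm t * Pg fm x i t \<le> fm t"
        using b1 n by (auto intro: mult_left_le)
      moreover have "0 \<le> fp t * Pg fp x i t" "0 \<le> fm t * Pg fm x i t" using b1 n by auto
      ultimately show ?thesis using n by simp
    next
      case False
      then show ?thesis using out by simp
    qed
  qed
qed

lemma improve: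
  fixes x :: "('a::finite \<Rightarrow> real) \<Rightarrow> 'a \<Rightarrow> real"
  assumes x: "is_mechanism x" and fx: "feasible fp fm x i"
    and bot: "\<forall>\<epsilon>>0. \<exists>\<sigma>\<in>{0<..<1}. \<sigma> \<le> \<epsilon> \<and> 0 < Pg fm x i \<sigma>"
  shows "\<exists>y. is_mechanism y \<and> feasible fp fm y i \<and> expected_alloc fp fm x i < expected_alloc fp fm y i"
proof -
  define P where "P = Pg fp x i"
  define M where "M = Pg fm x i"
  obtain \<delta> where \<delta>: "\<delta> > 0" "\<delta> \<le> 1/2"
    and phi: "\<And>r r'. 0 < r \<Longrightarrow> r < r' \<Longrightarrow> r' \<le> \<delta> \<Longrightarrow> r * (1 - r) * f r < r' * (1 - r') * f r'"
    using phi_mono by blast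
  obtain t1 where t1: "t1 \<in> {0<..<1}" "t1 \<le> \<delta>" "0 < M t1" using bot \<delta> unfolding M_def by blast
  define t0 where "t0 = M t1 / (P t1 + M t1)"
  have bnd: "0 \<le> P t \<and> P t \<le> 1 \<and> 0 \<le> M t \<and> M t \<le> 1" if "t \<in> {0<..<1}" for t
    using Pg_bnd[OF x _ that, of fp i] Pg_bnd[OF x _ that, of fm i] unfolding P_def M_def by auto
  have t0pos: "0 < t0" unfolding t0_def using t1 bnd[OF t1(1)] by simp
  obtain \<sigma> where \<sigma>: "\<sigma> \<in> {0<..<1}" "\<sigma> \<le> t0 / 2" "0 < M \<sigma>"
    using bot t0pos unfolding M_def by (metis half_gt_zero)
  have \<sigma>': "0 < \<sigma>" "\<sigma> < t0" using \<sigma> t0pos by auto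
  have cg: "cond_gain fp fm x i si t = g1 P M si t" if "t \<in> {0<..<1}" for si t
    using cond_gain_eq[OF x that] unfolding g1_def P_def M_def by simp
  have ic: "ic1 P M" using fx unfolding feasible_def ic1_def by (simp add: cg)
  have mP: "P \<in> borel_measurable borel" "M \<in> borel_measurable borel"
    using Pg_meas[OF x, of fp i] Pg_meas[OF x, of fm i] unfolding P_def M_def by auto
  define py where "py = (\<lambda>t. if t \<le> t0 then 0 else if t < t1 then P t1 else P t)"
  define my where "my = (\<lambda>t. if t \<le> t0 then 0 else if t < t1 then M t1 else M t)"
  have c1: "ic1 py my"
    and c2: "0 < (LINT s:{0<..<1}|lborel. f s * (s * (py s - P s) + (1 - s) * (my s - M s)))"
    using core1d[OF ic mP bnd f_int _ fpos phi \<delta>(2) _ t1(2) _ t0_def \<sigma>' \<sigma>(3) py_def my_def] out t1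
    by auto
  define y where "y s j = (if j = i then (if s i \<le> t0 then 0 else if s i < t1 then x (s(i := t1)) i else x s i) else x s j)"
    for s :: "'a \<Rightarrow> real" and j
  have Py: "Pg g y i t = (if t \<le> t0 then 0 else if t < t1 then Pg g x i t1 else Pg g x i t)" for g t
    unfolding Pg_def y_def by auto
  have xm: "(\<lambda>s. x s j) \<in> borel_measurable (PiM UNIV (\<lambda>_. lborel))" for j
    using x unfolding is_mechanism_def by blast
  have ymech: "is_mechanism y"
    unfolding is_mechanism_def
  proof (intro conjI allI impI)
    fix j
    show "(\<lambda>s. y s j) \<in> borel_measurable (PiM UNIV (\<lambda>_. lborel))"
    proof (cases "j = i")
      case True
      have c: "(\<lambda>s. x (s(i := t1)) i) \<in> borel_measurable (PiM UNIV (\<lambda>_. lborel))"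
        using measurable_comp[OF meas_upd_const' xm] by (simp add: comp_def)
      have ci: "(\<lambda>s::'a \<Rightarrow> real. s i) \<in> borel_measurable (PiM UNIV (\<lambda>_. lborel))"
        using measurable_component_singleton[of i UNIV "\<lambda>_::'a. lborel"] by simp
      show ?thesis unfolding y_def using True c ci xm[of i] by simp measurable
    next
      case False
      then show ?thesis unfolding y_def using xm[of j] by simp
    qed
  next
    fix s :: "'a \<Rightarrow> real" and j assume s: "sig_profile s"
    have s1: "sig_profile (s(i := t1))" using s t1 unfolding sig_profile_def by auto
    show "0 \<le> y s j" "y s j \<le> 1" unfolding y_def using x s s1 unfolding is_mechanism_def by auto
  qed
  have yfeas: "feasible fp fm y i"
  proof -
    have cgy: "cond_gain fp fm y i si t = g1 py my si t" if "t \<in> {0<..<1}" for si t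
      using cond_gain_eq[OF ymech that, of i si] unfolding g1_def py_def my_def P_def M_def by (simp add: Py)
    show ?thesis using c1 unfolding feasible_def ic1_def by (simp add: cgy)
  qed
  have "expected_alloc fp fm y i - expected_alloc fp fm x i =
      (\<integral>t. (fp t * Pg fp y i t + fm t * Pg fm y i t) / 2 - (fp t * Pg fp x i t + fm t * Pg fm x i t) / 2 \<partial>lborel)"
    unfolding ea_eq[OF x] ea_eq[OF ymech] using A_int[OF x] A_int[OF ymech] by simp
  also have "\<dots> = (LINT s:{0<..<1}|lborel. f s * (s * (py s - P s) + (1 - s) * (my s - M s)))"
    unfolding set_lebesgue_integral_def
  proof (rule Bochner_Integration.integral_cong[OF refl])
    fix t
    show "(fp t * Pg fp y i t + fm t * Pg fm y i t) / 2 - (fp t * Pg fp x i t + fm t * Pg fm x i t) / 2 =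
      indicat_real {0<..<1} t *\<^sub>R (f t * (t * (py t - P t) + (1 - t) * (my t - M t)))"
    proof (cases "t \<in> {0<..<1}")
      case True
      have e: "Pg fp y i t = py t" "Pg fm y i t = my t" unfolding Py py_def my_def P_def M_def by auto
      show ?thesis unfolding e fp_eq[OF True] fm_eq[OF True] using True
        by (simp add: P_def M_def field_simps)
    next
      case False
      then show ?thesis using out by simp
    qed
  qed
  finally have "expected_alloc fp fm x i < expected_alloc fp fm y i" using c2 by simp
  then show ?thesis using ymech yfeas by blast
qed


lemma M_pos:
  fixes x :: "('a::finite \<Rightarrow> real) \<Rightarrow> 'a \<Rightarrow> real"
  assumes x: "is_mechanism x" and n2: "CARD('a) \<ge> 2" and \<sigma>: "\<sigma> \<in> {0<..<1}" and \<kappa>: "0 < \<kappa>"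
    and thr: "\<And>r. (\<forall>k\<in>UNIV - {i}. r k \<in> {0<..<1}) \<Longrightarrow>
               x (r(i := \<sigma>)) i = \<kappa> * (if LR_minus i (r(i := \<sigma>)) \<ge> \<tau> then 1 else 0)"
  shows "0 < Pg fm x i \<sigma>"
proof -
  interpret product_sigma_finite "\<lambda>_::'a. lborel" by (rule psf)
  define J where "J = (UNIV :: 'a set) - {i}"
  have cJ: "card J \<ge> 1" unfolding J_def using n2 by (simp add: card_Diff_singleton)
  define T where "T = max 1 \<tau>"
  have T1: "1 \<le> T" unfolding T_def by simp
  define c where "c = T / (1 + T)"
  have c01: "0 < c" "c < 1" unfolding c_def using T1 by (auto simp: field_simps)
  have ratio: "T \<le> u / (1 - u)" if "u \<in> {c<..<1}" for u
  proof -
    have "c < u" "u < 1" using that by auto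
    then have "T < u * (1 + T)" unfolding c_def using T1 by (simp add: field_simps)
    then have "T * (1 - u) \<le> u" by (simp add: algebra_simps)
    then show ?thesis using \<open>u < 1\<close> by (simp add: field_simps)
  qed
  define g where "g u = fm u * indicator {c<..<1} u" for u
  have gi: "integrable lborel g"
    unfolding g_def[abs_def] using integrable_real_mult_indicator[OF _ intm, of "{c<..<1}"] by simp
  have gpos: "0 < integral\<^sup>L lborel g"
  proof -
    have si: "set_integrable lborel {c<..<1} fm"
      unfolding set_integrable_def using integrable_mult_indicator[OF _ intm, of "{c<..<1}"] by simp
    have "0 < (LINT u:{c<..<1}|lborel. fm u)"
      by (rule set_integral_pos_interval[OF si _ _ order_refl]) (use c01 fm_pos nonneg in auto)
    then show ?thesis unfolding set_lebesgue_integral_def g_def by (simp add: mult.commute)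
  qed
  have low: "\<kappa> * (\<Prod>k\<in>J. g (r k)) \<le> (\<Prod>k\<in>J. fm (r k)) * x (r(i := \<sigma>)) i" for r
  proof (cases "\<forall>k\<in>J. r k \<in> {c<..<1}")
    case True
    have r01: "\<forall>k\<in>UNIV - {i}. r k \<in> {0<..<1}"
    proof
      fix k assume "k \<in> UNIV - {i}"
      then have "c < r k" "r k < 1" using True unfolding J_def by auto
      then show "r k \<in> {0<..<1}" using c01 by auto
    qed
    have "LR_minus i (r(i := \<sigma>)) = (\<Prod>k\<in>J. r k / (1 - r k))"
      unfolding LR_minus_def J_def by (rule prod.cong) auto
    also have "\<dots> \<ge> (\<Prod>k\<in>J. T)"
      by (rule prod_mono) (use True ratio T1 in auto)
    finally have "T ^ card J \<le> LR_minus i (r(i := \<sigma>))" by simp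
    moreover have "T ^ 1 \<le> T ^ card J" using T1 cJ by (intro power_increasing) auto
    ultimately have "\<tau> \<le> LR_minus i (r(i := \<sigma>))" unfolding T_def by auto
    then have "x (r(i := \<sigma>)) i = \<kappa>" using thr[OF r01] by simp
    moreover have "(\<Prod>k\<in>J. g (r k)) = (\<Prod>k\<in>J. fm (r k))"
      using True by (intro prod.cong) (auto simp: g_def)
    ultimately show ?thesis by simp
  next
    case False
    then obtain k where "k \<in> J" "r k \<notin> {c<..<1}" by blast
    then have z: "(\<Prod>k\<in>J. g (r k)) = 0" unfolding g_def by (intro prod_zero) (auto intro!: bexI[of _ k])
    show ?thesis unfolding z using integrand_bnd[OF x _ \<sigma>, where g=fm and r=r and i=i] unfolding J_def by simp
  qed
  have "0 < \<kappa> * (\<Prod>k\<in>J. integral\<^sup>L lborel g)"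
    using \<kappa> gpos by (simp add: prod_pos)
  also have "\<dots> = (\<integral>r. \<kappa> * (\<Prod>k\<in>J. g (r k)) \<partial>PiM J (\<lambda>_. lborel))"
    using product_integral_prod[of J "\<lambda>_. g"] gi unfolding J_def by simp
  also have "\<dots> \<le> Pg fm x i \<sigma>"
    unfolding Pg_def J_def[symmetric]
  proof (rule integral_mono)
    show "integrable (PiM J (\<lambda>_. lborel)) (\<lambda>r. \<kappa> * (\<Prod>k\<in>J. g (r k)))"
      using product_integrable_prod[of J "\<lambda>_. g"] gi unfolding J_def by simp
    show "integrable (PiM J (\<lambda>_. lborel)) (\<lambda>r. (\<Prod>k\<in>J. fm (r k)) * x (r(i := \<sigma>)) i)"
      using integrand_int[OF x _ \<sigma>, where g=fm and i=i] unfolding J_def by simp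
  qed (rule low)
  finally show ?thesis .
qed

end

lemma eff_thr:
  fixes r :: "'a::finite \<Rightarrow> real"
  assumes \<sigma>: "\<sigma> \<in> {0<..<1}"
  shows "efficient_mech (r(i := \<sigma>)) i = 1 * (if LR_minus i (r(i := \<sigma>)) \<ge> (1 - \<sigma>) / \<sigma> then 1 else 0)"
proof -
  have "LR_full (r(i := \<sigma>)) = (r(i := \<sigma>)) i / (1 - (r(i := \<sigma>)) i) * LR_minus i (r(i := \<sigma>))"
    unfolding LR_full_def LR_minus_def by (rule prod.remove) auto
  then have e: "LR_full (r(i := \<sigma>)) = \<sigma> / (1 - \<sigma>) * LR_minus i (r(i := \<sigma>))" by simp
  have "(1 \<le> \<sigma> / (1 - \<sigma>) * L) \<longleftrightarrow> ((1 - \<sigma>) / \<sigma> \<le> L)" for L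
    using \<sigma> by (simp add: field_simps)
  then show ?thesis unfolding efficient_mech_def e by simp
qed

theorem proposition1:
  fixes fp fm :: "real \<Rightarrow> real"
    and x :: "('a::finite \<Rightarrow> real) \<Rightarrow> 'a \<Rightarrow> real"
    and i :: 'a
  assumes n2: "CARD('a) \<ge> 2"
    and meas: "fp \<in> borel_measurable borel" "fm \<in> borel_measurable borel"
    and nonneg: "\<forall>u. 0 \<le> fp u \<and> 0 \<le> fm u"
    and int: "integrable lborel fp" "integrable lborel fm"
    and prob: "(\<integral>u. fp u \<partial>lborel) = 1" "(\<integral>u. fm u \<partial>lborel) = 1"
    and mutual_ac: "\<forall>u. fp u = 0 \<longleftrightarrow> fm u = 0"
    and normalized: "\<forall>u\<in>{0<..<1}. fp u / (fp u + fm u) = u"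
    and support: "\<forall>u. 0 < mixf fp fm u \<longleftrightarrow> u \<in> {0<..<1}"
    and diff: "\<forall>u\<in>{0<..<1}. mixf fp fm differentiable (at u)"
    and cont_deriv: "continuous_on {0<..<1} (deriv (mixf fp fm))"
    and bounded_ratio: "\<exists>B. \<forall>u\<in>{0<..<1}. \<bar>deriv (mixf fp fm) u / mixf fp fm u\<bar> \<le> B"
  shows "(is_mechanism x \<and> optimal fp fm x i \<and> mono_threshold x i \<longrightarrow>
            (\<exists>\<epsilon>>0. \<forall>s. sig_profile s \<and> s i \<le> \<epsilon> \<longrightarrow> x s i = 0))
         \<and> \<not> optimal fp fm efficient_mech i"
proof -
  interpret dens fp fm
    by (rule dens.intro) (fact meas(1) meas(2) nonneg int(1) int(2) prob(1) prob(2) normalized support diff bounded_ratio)+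
  show ?thesis
  proof (intro conjI impI)
    assume H: "is_mechanism x \<and> optimal fp fm x i \<and> mono_threshold x i"
    then have xm: "is_mechanism x" and fx: "feasible fp fm x i"
      and opt: "\<And>y. is_mechanism y \<and> feasible fp fm y i \<Longrightarrow> expected_alloc fp fm y i \<le> expected_alloc fp fm x i"
      unfolding optimal_def by blast+
    from H obtain PP where PP: "\<forall>S\<in>PP. S \<noteq> {} \<and> is_interval S" "\<Union>PP = {0<..<1}"
      "\<forall>S\<in>PP. \<exists>\<kappa> \<tau>. 0 \<le> \<kappa> \<and> \<kappa> \<le> 1 \<and> 0 \<le> \<tau> \<and>
           (\<forall>s. sig_profile s \<and> s i \<in> S \<longrightarrow> x s i = \<kappa> * (if LR_minus i s \<ge> \<tau> then 1 else 0))"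
      unfolding mono_threshold_def by blast
    show "\<exists>\<epsilon>>0. \<forall>s. sig_profile s \<and> s i \<le> \<epsilon> \<longrightarrow> x s i = 0"
    proof (rule ccontr)
      assume nc: "\<not> (\<exists>\<epsilon>>0. \<forall>s. sig_profile s \<and> s i \<le> \<epsilon> \<longrightarrow> x s i = 0)"
      have bot: "\<forall>\<epsilon>>0. \<exists>\<sigma>\<in>{0<..<1}. \<sigma> \<le> \<epsilon> \<and> 0 < Pg fm x i \<sigma>"
      proof (intro allI impI)
        fix \<epsilon> :: real assume "\<epsilon> > 0"
        with nc obtain s where s: "sig_profile s" "s i \<le> \<epsilon>" "x s i \<noteq> 0" by blast
        have \<sigma>: "s i \<in> {0<..<1}" using s unfolding sig_profile_def by blast
        then obtain S where S: "S \<in> PP" "s i \<in> S" using PP(2) by blast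
        then obtain \<kappa> \<tau> where k: "0 \<le> \<kappa>"
          and kx: "\<And>s'. sig_profile s' \<and> s' i \<in> S \<Longrightarrow> x s' i = \<kappa> * (if LR_minus i s' \<ge> \<tau> then 1 else 0)"
          using PP(3) by blast
        have "\<kappa> \<noteq> 0" using kx[of s] s S by auto
        then have kpos: "0 < \<kappa>" using k by simp
        have thr: "x (r(i := s i)) i = \<kappa> * (if LR_minus i (r(i := s i)) \<ge> \<tau> then 1 else 0)"
          if "\<forall>k\<in>UNIV - {i}. r k \<in> {0<..<1}" for r
          using kx[of "r(i := s i)"] sig_upd[OF that \<sigma>] S by simp
        have "0 < Pg fm x i (s i)" by (rule M_pos[OF xm n2 \<sigma> kpos thr])
        then show "\<exists>\<sigma>\<in>{0<..<1}. \<sigma> \<le> \<epsilon> \<and> 0 < Pg fm x i \<sigma>" using \<sigma> s by blast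
      qed
      from improve[OF xm fx bot] obtain y where "is_mechanism y" "feasible fp fm y i"
        "expected_alloc fp fm x i < expected_alloc fp fm y i" by blast
      with opt[of y] show False by simp
    qed
  next
    show "\<not> optimal fp fm efficient_mech i"
    proof
      assume "optimal fp fm efficient_mech i"
      then have xm: "is_mechanism (efficient_mech :: ('a \<Rightarrow> real) \<Rightarrow> 'a \<Rightarrow> real)"
        and fx: "feasible fp fm efficient_mech i"
        and opt: "\<And>y. is_mechanism y \<and> feasible fp fm y i \<Longrightarrow> expected_alloc fp fm y i \<le> expected_alloc fp fm efficient_mech i"
        unfolding optimal_def by blast+
      have bot: "\<forall>\<epsilon>>0. \<exists>\<sigma>\<in>{0<..<1}. \<sigma> \<le> \<epsilon> \<and> 0 < Pg fm efficient_mech i \<sigma>"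
      proof (intro allI impI)
        fix \<epsilon> :: real assume e: "\<epsilon> > 0"
        define \<sigma> where "\<sigma> = min \<epsilon> (1/2)"
        have \<sigma>: "\<sigma> \<in> {0<..<1}" "\<sigma> \<le> \<epsilon>" using e unfolding \<sigma>_def by auto
        have "0 < Pg fm efficient_mech i \<sigma>"
          by (rule M_pos[OF xm n2 \<sigma>(1), where \<kappa>=1 and \<tau>="(1 - \<sigma>) / \<sigma>"]) (simp_all add: eff_thr[OF \<sigma>(1)])
        then show "\<exists>\<sigma>\<in>{0<..<1}. \<sigma> \<le> \<epsilon> \<and> 0 < Pg fm efficient_mech i \<sigma>" using \<sigma> by blast
      qed
      from improve[OF xm fx bot] obtain y where "is_mechanism y" "feasible fp fm y i"
        "expected_alloc fp fm efficient_mech i < expected_alloc fp fm y i" by blast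
      with opt[of y] show False by simp
    qed
  qed
qed


end
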